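(* Fix integers $m,n\ge1$, a time index $t$ with scale factor $\alpha_t\in(0,1)$ and $\upsilon_t=1-\alpha_t$. Let $p^\lambda_t$ and $p_t(\cdot\mid x^\star_1),\dots,p_t(\cdot\mid x^\star_n)$ be positive, twice continuously differentiable probability densities on $\mathbb{R}^m$ (the diffused prior and the diffused single-observation posteriors). For $k\in\{\lambda,1,\dots,n\}$ write $g_k(\theta)=\nabla_\theta\log p^\lambda_t(\theta)$ if $k=\lambda$ and $g_k(\theta)=\nabla_\theta\log p_t(\theta\mid x^\star_k)$ otherwise, and define $$\boldsymbol{\mu}_{t,k}(\theta)=\frac{1}{\sqrt{\alpha_t}}\left(\theta+\upsilon_t\, g_k(\theta)\right),\qquad \Sigma_{t,k}(\theta)=\frac{\upsilon_t}{\sqrt{\alpha_t}}\nabla_\theta\boldsymbol{\mu}_{t,k}(\theta).$$ Assume that each $\Sigma_{t,k}(\theta)$ is symmetric positive definite and that $\Lambda(\theta)=\sum_{j=1}^{n}\Sigma_{t,j}(\theta)^{-1}+(1-n)\Sigma_{t,\lambda}(\theta)^{-1}$ is positive definite for all $\theta$. Define $$\log\hat L_\lambda(\theta)=\log\int_{\mathbb{R}^m}\mathcal{N}\big(\theta_0;\boldsymbol{\mu}_{t,\lambda}(\theta),\Sigma_{t,\lambda}(\theta)\big)^{1-n}\prod_{j=1}^{n}\mathcal{N}\big(\theta_0;\boldsymbol{\mu}_{t,j}(\theta),\Sigma_{t,j}(\theta)\big)\,\mathrm{d}\theta_0$$ and the approximate tall-data posterior score $$\hat s(\theta)=(1-n)\nabla_\theta\log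 p^\lambda_t(\theta)+\sum_{j=1}^{n}\nabla_\theta\log p_t(\theta\mid x^\star_j)+\nabla_\theta\log\hat L_\lambda(\theta).$$ If $\nabla_\theta\Sigma_{t,j}(\theta)=0$ for all $1\le j\le n$ and $\nabla_\theta\Sigma_{t,\lambda}(\theta)=0$ (i.e. all these covariance matrices are constant in $\theta$), then for all $\theta\in\mathbb{R}^m$ $$\hat s(\theta)=\Lambda(\theta)^{-1}\left(\sum_{j=1}^{n}\Sigma_{t,j}(\theta)^{-1}\nabla_\theta\log p_t(\theta\mid x^\star_j)+(1-n)\Sigma_{t,\lambda}(\theta)^{-1}\nabla_\theta\log p^\lambda_t(\theta)\right).$$
   Context: $\mathcal{N}(\theta;\boldsymbol{\mu},\Sigma)$ denotes the multivariate Gaussian density with mean $\boldsymbol{\mu}$ and covariance $\Sigma$. The forward (noising) kernel is $q_{t|0}(\theta_t\mid\theta_0)=\mathcal{N}(\theta_t;\sqrt{\alpha_t}\theta_0,\upsilon_t\mathbf{I}_m)$; the quantities $\boldsymbol{\mu}_{t,k}$ and $\Sigma_{t,k}$ are the (Tweedie) mean and covariance of the Gaussian approximation of the corresponding backward kernel $p_{0|t}(\theta_0\mid\theta_t)$, and $\hat s$ approximates the score $\nabla_{\theta_t}\log p_t(\theta_t\mid x^\star_{1:n})$ of the diffused tall-data posterior. *)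

theory Defs
  imports "HOL-Analysis.Analysis"
begin

definition grad :: "(real^'m \<Rightarrow> real) \<Rightarrow> real^'m \<Rightarrow> real^'m" where
  "grad f x = (\<chi> i. frechet_derivative f (at x) (axis i 1))"

definition C2 :: "(real^'m \<Rightarrow> real) \<Rightarrow> bool" where
  "C2 f \<longleftrightarrow> (\<exists>f' f''. (\<forall>x. (f has_derivative blinfun_apply (f' x)) (at x)) \<and>
                      (\<forall>x. (f' has_derivative blinfun_apply (f'' x)) (at x)) \<and>
                      continuous_on UNIV f'')"

definition prob_density :: "(real^'m \<Rightarrow> real) \<Rightarrow> bool" where
  "prob_density p \<longleftrightarrow> (\<forall>x. 0 \<le> p x) \<and> has_bochner_integral lborel p 1"

definition pos_def :: "real^'m^'m \<Rightarrow> bool" where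
  "pos_def A \<longleftrightarrow> (\<forall>x. x \<noteq> 0 \<longrightarrow> 0 < x \<bullet> (A *v x))"

definition sym_pos_def :: "real^'m^'m \<Rightarrow> bool" where
  "sym_pos_def A \<longleftrightarrow> transpose A = A \<and> pos_def A"

definition gauss :: "real^'m \<Rightarrow> real^'m \<Rightarrow> real^'m^'m \<Rightarrow> real" where
  "gauss x mu S = exp (- (1/2) * ((x - mu) \<bullet> (matrix_inv S *v (x - mu))))
                   / sqrt ((2 * pi) ^ CARD('m) * det S)"

definition tw_mean :: "real \<Rightarrow> (real^'m \<Rightarrow> real) \<Rightarrow> real^'m \<Rightarrow> real^'m" where
  "tw_mean \<alpha> q \<theta> = (1 / sqrt \<alpha>) *\<^sub>R (\<theta> + (1 - \<alpha>) *\<^sub>R grad (\<lambda>u. ln (q u)) \<theta>)"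

definition tw_cov :: "real \<Rightarrow> (real^'m \<Rightarrow> real) \<Rightarrow> real^'m \<Rightarrow> real^'m^'m" where
  "tw_cov \<alpha> q \<theta> = ((1 - \<alpha>) / sqrt \<alpha>) *\<^sub>R jacobian (tw_mean \<alpha> q) (at \<theta>)"

definition Lam :: "real \<Rightarrow> (real^'m \<Rightarrow> real) \<Rightarrow> (nat \<Rightarrow> real^'m \<Rightarrow> real) \<Rightarrow> nat \<Rightarrow> real^'m \<Rightarrow> real^'m^'m" where
  "Lam \<alpha> pl p n \<theta> = (\<Sum>j\<in>{1..n}. matrix_inv (tw_cov \<alpha> (p j) \<theta>))
                      + (1 - real n) *\<^sub>R matrix_inv (tw_cov \<alpha> pl \<theta>)"

definition Lhat :: "real \<Rightarrow> (real^'m \<Rightarrow> real) \<Rightarrow> (nat \<Rightarrow> real^'m \<Rightarrow> real) \<Rightarrow> nat \<Rightarrow> real^'m \<Rightarrow> real" where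
  "Lhat \<alpha> pl p n \<theta> = (LINT \<theta>0|lborel.
      gauss \<theta>0 (tw_mean \<alpha> pl \<theta>) (tw_cov \<alpha> pl \<theta>) powr (1 - real n)
      * (\<Prod>j\<in>{1..n}. gauss \<theta>0 (tw_mean \<alpha> (p j) \<theta>) (tw_cov \<alpha> (p j) \<theta>)))"

definition shat :: "real \<Rightarrow> (real^'m \<Rightarrow> real) \<Rightarrow> (nat \<Rightarrow> real^'m \<Rightarrow> real) \<Rightarrow> nat \<Rightarrow> real^'m \<Rightarrow> real^'m" where
  "shat \<alpha> pl p n \<theta> = (1 - real n) *\<^sub>R grad (\<lambda>u. ln (pl u)) \<theta>
      + (\<Sum>j\<in>{1..n}. grad (\<lambda>u. ln (p j u)) \<theta>)
      + grad (\<lambda>u. ln (Lhat \<alpha> pl p n u)) \<theta>"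

end

theory Submission
  imports Defs "HOL-Probability.Distributions"
begin


lemma smv: "(k *\<^sub>R (A::real^'n^'m)) *v v = k *\<^sub>R (A *v v)"
  by (simp add: scaleR_matrix_vector_assoc)

lemma inner_mat_sym:
  fixes A :: "real^'m^'m"
  assumes "transpose A = A"
  shows "x \<bullet> (A *v y) = (A *v x) \<bullet> y"
proof -
  have "x \<bullet> (A *v y) = (x v* A) \<bullet> y" by (simp add: dot_lmul_matrix)
  also have "x v* A = transpose A *v x" by simp
  finally show ?thesis using assms by simp
qed

lemma pos_def_invertible:
  fixes A :: "real^'m^'m"
  assumes "pos_def A"
  shows "invertible A"
proof -
  have inj: "inj ((*v) A)"
  proof (rule injI)
    fix x y assume "A *v x = A *v y"
    then have "A *v (x - y) = 0" by (simp add: matrix_vector_mult_diff_distrib)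
    then show "x = y" using assms unfolding pos_def_def
      by (metis inner_zero_right less_irrefl right_minus_eq)
  qed
  have "det A \<noteq> 0"
    using det_nz_iff_inj[OF matrix_vector_mul_linear, of A] inj by (simp add: matrix_of_matrix_vector_mul)
  then show ?thesis by (simp add: invertible_det_nz)
qed

lemma matrix_inv_both:
  fixes A :: "real^'m^'m"
  assumes "invertible A"
  shows "A ** matrix_inv A = mat 1" "matrix_inv A ** A = mat 1"
proof -
  have "\<exists>A'. A ** A' = mat 1 \<and> A' ** A = mat 1" using assms by (simp add: invertible_def)
  then have "A ** matrix_inv A = mat 1 \<and> matrix_inv A ** A = mat 1"
    unfolding matrix_inv_def by (rule someI_ex)
  then show "A ** matrix_inv A = mat 1" "matrix_inv A ** A = mat 1" by auto
qed

lemma matrix_inv_sym: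
  fixes A :: "real^'m^'m"
  assumes "invertible A" "transpose A = A"
  shows "transpose (matrix_inv A) = matrix_inv A"
proof -
  let ?B = "matrix_inv A"
  have "transpose (?B ** A) = mat 1" using matrix_inv_both[OF assms(1)] by (simp add: transpose_mat)
  then have r: "A ** transpose ?B = mat 1" using assms(2) by (simp add: matrix_transpose_mul)
  have "?B = ?B ** (A ** transpose ?B)" using r by simp
  also have "\<dots> = (?B ** A) ** transpose ?B" by (simp add: matrix_mul_assoc)
  also have "\<dots> = transpose ?B" using matrix_inv_both[OF assms(1)] by simp
  finally show ?thesis by simp
qed

lemma pos_def_det_pos:
  fixes A :: "real^'m^'m"
  assumes "pos_def A"
  shows "0 < det A"
proof (rule ccontr)
  assume "\<not> 0 < det A"
  define B where "B t = (1 - t) *\<^sub>R mat 1 + t *\<^sub>R A" for t :: real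
  have cont: "continuous_on {0..1} (\<lambda>t. det (B t))"
    unfolding det_def B_def
    by (intro continuous_intros)
  have "B 0 = mat 1" "B 1 = A" by (simp_all add: B_def)
  then have "det (B 1) \<le> 0" "0 \<le> det (B 0)" using \<open>\<not> 0 < det A\<close> by auto
  then obtain t where t: "0 \<le> t" "t \<le> 1" "det (B t) = 0"
    using IVT2[of "\<lambda>t. det (B t)" 1 0 0] cont
    by (metis IVT2' order.refl zero_le_one)
  have "pos_def (B t)"
    unfolding pos_def_def
  proof (intro allI impI)
    fix x :: "real^'m" assume "x \<noteq> 0"
    have eq: "x \<bullet> (B t *v x) = (1 - t) * (x \<bullet> x) + t * (x \<bullet> (A *v x))"
      by (simp add: B_def algebra_simps matrix_vector_mult_scaleR smv)
    have xx: "0 < x \<bullet> x" using \<open>x \<noteq> 0\<close> by simp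
    have xa: "0 < x \<bullet> (A *v x)" using assms \<open>x \<noteq> 0\<close> by (simp add: pos_def_def)
    have a: "0 \<le> (1 - t) * (x \<bullet> x)" using t xx by simp
    show "0 < x \<bullet> (B t *v x)"
    proof (cases "t = 0")
      case True then show ?thesis using eq xx by simp
    next
      case False
      then have "0 < t * (x \<bullet> (A *v x))" using t xa by simp
      then show ?thesis using eq a by linarith
    qed
  qed
  then have "det (B t) \<noteq> 0" using pos_def_invertible invertible_det_nz by blast
  with t show False by simp
qed



lemma pos_def_coercive:
  fixes A :: "real^'m^'m"
  assumes "pos_def A"
  shows "\<exists>c>0. \<forall>x. c * (norm x)\<^sup>2 \<le> x \<bullet> (A *v x)"
proof -
  let ?f = "\<lambda>x::real^'m. x \<bullet> (A *v x)"
  have cont: "continuous_on (sphere 0 1) ?f"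
    by (intro continuous_intros linear_continuous_on) auto
  have ne: "sphere (0::real^'m) 1 \<noteq> {}"
  proof -
    obtain i :: 'm where True by simp
    have "axis i (1::real) \<in> sphere 0 1" by simp
    then show ?thesis by blast
  qed
  obtain u where u: "u \<in> sphere 0 1" "\<forall>y\<in>sphere 0 1. ?f u \<le> ?f y"
    using continuous_attains_inf[OF compact_sphere ne cont] by blast
  have "u \<noteq> 0" using u by auto
  then have cpos: "0 < ?f u" using assms by (simp add: pos_def_def)
  show ?thesis
  proof (intro exI[of _ "?f u"] conjI allI cpos)
    fix x :: "real^'m"
    show "?f u * (norm x)\<^sup>2 \<le> ?f x"
    proof (cases "x = 0")
      case True then show ?thesis by simp
    next
      case False
      define y where "y = (1 / norm x) *\<^sub>R x"
      have "y \<in> sphere 0 1" using False by (simp add: y_def)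
      then have "?f u \<le> ?f y" using u by blast
      have x: "x = norm x *\<^sub>R y" using False by (simp add: y_def)
      have "?f x = (norm x)\<^sup>2 * ?f y"
        by (subst x, subst x) (simp add: matrix_vector_mult_scaleR power2_eq_square)
      then show ?thesis using \<open>?f u \<le> ?f y\<close>
        by (metis mult.commute mult_right_mono zero_le_power2)
    qed
  qed
qed

lemma norm_sq_basis: "(norm (x::'a::euclidean_space))\<^sup>2 = (\<Sum>b\<in>Basis. (x \<bullet> b)\<^sup>2)"
proof -
  have "(norm x)\<^sup>2 = x \<bullet> x" by (simp add: power2_norm_eq_inner)
  also have "\<dots> = (\<Sum>b\<in>Basis. (x \<bullet> b) * (x \<bullet> b))" by (rule euclidean_inner)
  finally show ?thesis by (simp add: power2_eq_square)
qed

lemma gauss_integrable: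
  fixes c :: real
  assumes "0 < c"
  shows "integrable lborel (\<lambda>x::'a::euclidean_space. exp (- c * (norm x)\<^sup>2))"
proof -
  define s where "s = 1 / sqrt (2 * c)"
  have s: "0 < s" using assms by (simp add: s_def)
  have s2: "2 * s\<^sup>2 = 1 / c" using assms by (simp add: s_def power_divide)
  define K where "K = (1 / sqrt (2 * pi * s\<^sup>2)) ^ DIM('a)"
  have Kpos: "0 < K" using s by (simp add: K_def)
  have eq: "(\<Prod>b\<in>(Basis::'a set). normal_density 0 s (x \<bullet> b)) = K * exp (- c * (norm x)\<^sup>2)" for x :: 'a
  proof -
    have "(\<Prod>b\<in>(Basis::'a set). normal_density 0 s (x \<bullet> b))
        = (\<Prod>b\<in>(Basis::'a set). (1 / sqrt (2 * pi * s\<^sup>2)) * exp (- c * (x \<bullet> b)\<^sup>2))"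
    proof (intro prod.cong refl)
      fix b :: 'a
      have "- ((x \<bullet> b) - 0)\<^sup>2 / (2 * s\<^sup>2) = - c * (x \<bullet> b)\<^sup>2" by (simp add: s2)
      then show "normal_density 0 s (x \<bullet> b) = (1 / sqrt (2 * pi * s\<^sup>2)) * exp (- c * (x \<bullet> b)\<^sup>2)"
        unfolding normal_density_def by simp
    qed
    also have "\<dots> = K * (\<Prod>b\<in>(Basis::'a set). exp (- c * (x \<bullet> b)\<^sup>2))"
      by (simp only: prod.distrib K_def prod_constant)
    also have "(\<Prod>b\<in>(Basis::'a set). exp (- c * (x \<bullet> b)\<^sup>2)) = exp (\<Sum>b\<in>Basis. - c * (x \<bullet> b)\<^sup>2)"
      by (simp add: exp_sum)
    also have "(\<Sum>b\<in>(Basis::'a set). - c * (x \<bullet> b)\<^sup>2) = - c * (norm x)\<^sup>2"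
      by (simp add: norm_sq_basis sum_distrib_left)
    finally show ?thesis .
  qed
  have nn: "(\<integral>\<^sup>+x. (\<Prod>b\<in>(Basis::'a set). normal_density 0 s (x \<bullet> b)) \<partial>lborel) = 1"
  proof -
    have "(\<integral>\<^sup>+x. (\<Prod>b\<in>(Basis::'a set). normal_density 0 s (x \<bullet> b)) \<partial>lborel)
        = (\<integral>\<^sup>+x. (\<Prod>b\<in>(Basis::'a set). ennreal (normal_density 0 s (x \<bullet> b))) \<partial>lborel)"
      by (simp add: prod_ennreal)
    also have "\<dots> = (\<Prod>b\<in>(Basis::'a set). (\<integral>\<^sup>+x. ennreal (normal_density 0 s x) \<partial>lborel))"
      by (rule nn_integral_lborel_prod) auto
    also have "(\<integral>\<^sup>+x. ennreal (normal_density 0 s x) \<partial>lborel) = 1"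
      using s by (subst nn_integral_eq_integral) auto
    finally show ?thesis by simp
  qed
  have int: "integrable lborel (\<lambda>x::'a. \<Prod>b\<in>Basis. normal_density 0 s (x \<bullet> b))"
    by (rule integrableI_nonneg) (auto simp: nn prod_nonneg)
  then have "integrable lborel (\<lambda>x::'a. (1/K) * (\<Prod>b\<in>Basis. normal_density 0 s (x \<bullet> b)))"
    by simp
  then show ?thesis using Kpos by (simp add: eq)
qed



lemma quad_cont: "continuous_on UNIV (\<lambda>x::real^'m. exp (- (1/2) * (x \<bullet> (A *v x))))"
  by (intro continuous_intros linear_continuous_on) auto

lemma quad_meas: "(\<lambda>x::real^'m. exp (- (1/2) * (x \<bullet> (A *v x)))) \<in> borel_measurable borel"
  by (rule borel_measurable_continuous_onI[OF quad_cont])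

lemma quad_int_pos:
  fixes A :: "real^'m^'m"
  assumes "pos_def A"
  shows "integrable lborel (\<lambda>x::real^'m. exp (- (1/2) * (x \<bullet> (A *v x))))"
    and "0 < integral\<^sup>L lborel (\<lambda>x::real^'m. exp (- (1/2) * (x \<bullet> (A *v x))))"
proof -
  obtain c where c: "c > 0" "\<forall>x. c * (norm x)\<^sup>2 \<le> x \<bullet> (A *v x)"
    using pos_def_coercive[OF assms] by blast
  have gi: "integrable lborel (\<lambda>x::real^'m. exp (- (c/2) * (norm x)\<^sup>2))"
    using gauss_integrable[of "c/2"] c by simp
  show int: "integrable lborel (\<lambda>x::real^'m. exp (- (1/2) * (x \<bullet> (A *v x))))"
  proof (rule Bochner_Integration.integrable_bound[OF gi])
    show "(\<lambda>x::real^'m. exp (- (1/2) * (x \<bullet> (A *v x)))) \<in> borel_measurable lborel"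
      using quad_meas by simp
    show "AE x in lborel. norm (exp (- (1/2) * (x \<bullet> (A *v x)))) \<le> norm (exp (- (c/2) * (norm x)\<^sup>2))"
      using c by (auto intro!: AE_I2)
  qed
  have "integral\<^sup>L lborel (\<lambda>x::real^'m. exp (- (1/2) * (x \<bullet> (A *v x)))) \<noteq> 0"
  proof
    assume "integral\<^sup>L lborel (\<lambda>x::real^'m. exp (- (1/2) * (x \<bullet> (A *v x)))) = 0"
    then have "AE x in lborel. exp (- (1/2) * ((x::real^'m) \<bullet> (A *v x))) = 0"
      using integral_nonneg_eq_0_iff_AE[OF int] by auto
    then have "AE x::real^'m in lborel. False" by simp
    then have "ae_filter (lborel :: (real^'m) measure) = bot" using trivial_limit_def by blast
    then show False by (simp add: ae_filter_eq_bot_iff)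
  qed
  moreover have "0 \<le> integral\<^sup>L lborel (\<lambda>x::real^'m. exp (- (1/2) * (x \<bullet> (A *v x))))"
    by (rule integral_nonneg_AE) auto
  ultimately show "0 < integral\<^sup>L lborel (\<lambda>x::real^'m. exp (- (1/2) * (x \<bullet> (A *v x))))" by linarith
qed

lemma integral_translate:
  fixes f :: "'a::euclidean_space \<Rightarrow> real"
  assumes "f \<in> borel_measurable borel"
  shows "integral\<^sup>L lborel (\<lambda>x. f (x - m)) = integral\<^sup>L lborel f"
proof -
  have "integral\<^sup>L lborel f = integral\<^sup>L (distr lborel borel ((+) (-m))) f"
    by (simp add: lborel_distr_plus)
  also have "\<dots> = integral\<^sup>L lborel (\<lambda>x. f (-m + x))"
    by (rule integral_distr) (auto simp: assms)
  finally show ?thesis by simp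
qed



lemma grad_of:
  assumes "(f has_derivative D) (at x)"
  shows "grad f x = (\<chi> i. D (axis i 1))"
  using frechet_derivative_at[OF assms] by (simp add: grad_def)

lemma grad_inner:
  assumes "(f has_derivative (\<lambda>h. v \<bullet> h)) (at x)"
  shows "grad f x = v"
  using grad_of[OF assms] by (simp add: inner_axis vec_eq_iff)

lemma vec_as_sum: "(\<chi> i. a i) = (\<Sum>i\<in>UNIV. a i *\<^sub>R axis i (1::real))"
  by (simp add: vec_eq_iff axis_def if_distrib cong: if_cong)

lemma tw_mean_differentiable:
  assumes "C2 q" "\<forall>x. 0 < q x"
  shows "tw_mean \<alpha> q differentiable (at \<theta>)"
proof -
  obtain f' f'' where f': "\<forall>x. (q has_derivative blinfun_apply (f' x)) (at x)"
    and f'': "\<forall>x. (f' has_derivative blinfun_apply (f'' x)) (at x)"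
    using assms(1) unfolding C2_def by blast
  have dl: "((\<lambda>u. ln (q u)) has_derivative (\<lambda>h. blinfun_apply (f' x) h / q x)) (at x)" for x
  proof -
    have "((\<lambda>u. ln (q u)) has_derivative (\<lambda>h. inverse (q x) * blinfun_apply (f' x) h)) (at x)"
      using f' assms(2) by (auto intro!: derivative_eq_intros)
    then show ?thesis by (simp add: divide_inverse mult.commute)
  qed
  have G: "grad (\<lambda>u. ln (q u)) = (\<lambda>x. \<Sum>i\<in>UNIV. (blinfun_apply (f' x) (axis i 1) / q x) *\<^sub>R axis i (1::real))"
    by (rule ext, subst grad_of[OF dl], rule vec_as_sum)
  have d1: "(\<lambda>x. blinfun_apply (f' x) (axis i 1)) differentiable (at x)" for i x
  proof -
    have "((\<lambda>x. blinfun_apply (f' x) (axis i 1)) has_derivative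
          (\<lambda>h. blinfun_apply (f' x) 0 + blinfun_apply (blinfun_apply (f'' x) h) (axis i 1))) (at x)"
      by (rule blinfun.FDERIV[OF f''[rule_format] has_derivative_const])
    then show ?thesis by (rule differentiableI)
  qed
  have dq: "q differentiable (at x)" for x using f' differentiableI by blast
  have di: "(\<lambda>x. (blinfun_apply (f' x) (axis i 1) / q x) *\<^sub>R axis i (1::real)) differentiable (at \<theta>)" for i
  proof -
    have "q \<theta> \<noteq> 0" using assms(2) by (metis less_irrefl)
    then have "(\<lambda>x. blinfun_apply (f' x) (axis i 1) / q x) differentiable (at \<theta>)"
      using d1 dq by (rule differentiable_divide[rotated 2])
    moreover have "(\<lambda>x. axis i (1::real)) differentiable (at \<theta>)" by simp
    ultimately show ?thesis by (rule differentiable_scaleR)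
  qed
  have "(\<lambda>x. \<Sum>i\<in>UNIV. (blinfun_apply (f' x) (axis i 1) / q x) *\<^sub>R axis i (1::real)) differentiable (at \<theta>)"
    by (rule differentiable_sum) (use di in auto)
  then show ?thesis
    unfolding tw_mean_def G
    by (intro differentiable_scaleR differentiable_add differentiable_const differentiable_ident) auto
qed

lemma tw_props:
  assumes "C2 q" "\<forall>x. 0 < q x" "0 < \<alpha>" "\<alpha> < 1"
    and "\<forall>\<theta>. (tw_cov \<alpha> q has_derivative (\<lambda>_. 0)) (at \<theta>)"
  shows "(tw_mean \<alpha> q has_derivative (\<lambda>h. (sqrt \<alpha> / (1 - \<alpha>)) *\<^sub>R (tw_cov \<alpha> q \<theta> *v h))) (at \<theta>)"
    and "tw_cov \<alpha> q \<theta> = tw_cov \<alpha> q 0"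
proof -
  have "(tw_mean \<alpha> q has_derivative (*v) (jacobian (tw_mean \<alpha> q) (at \<theta>))) (at \<theta>)"
    using tw_mean_differentiable[OF assms(1,2)] jacobian_works by blast
  moreover have "jacobian (tw_mean \<alpha> q) (at \<theta>) = (sqrt \<alpha> / (1 - \<alpha>)) *\<^sub>R tw_cov \<alpha> q \<theta>"
    using assms(3,4) by (simp add: tw_cov_def)
  ultimately show "(tw_mean \<alpha> q has_derivative (\<lambda>h. (sqrt \<alpha> / (1 - \<alpha>)) *\<^sub>R (tw_cov \<alpha> q \<theta> *v h))) (at \<theta>)"
    by (simp add: scaleR_matrix_vector_assoc)
  obtain c where "\<forall>x\<in>UNIV. tw_cov \<alpha> q x = c"
    using has_derivative_zero_constant[of UNIV "tw_cov \<alpha> q"] assms(5) by auto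
  then show "tw_cov \<alpha> q \<theta> = tw_cov \<alpha> q 0" by simp
qed



lemma sum_mat_vec: "(\<Sum>k\<in>I. A k) *v (x::real^'n) = (\<Sum>k\<in>I. A k *v x)"
  for A :: "'k \<Rightarrow> real^'n^'m"
proof (induction I rule: infinite_finite_induct)
  case (insert k F) then show ?case by (simp add: matrix_vector_mult_add_rdistrib)
qed (auto simp: matrix_vector_mult_0)

lemma mat_vec_sum: "(A::real^'n^'m) *v (\<Sum>k\<in>I. f k) = (\<Sum>k\<in>I. A *v f k)"
proof (induction I rule: infinite_finite_induct)
  case (insert k F) then show ?case by (simp add: matrix_vector_right_distrib)
qed auto

lemma complete_square:
  fixes P :: "'k \<Rightarrow> real^'m^'m" and mm :: "'k \<Rightarrow> real^'m" and L M :: "real^'m^'m"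
  assumes symP: "\<And>k. k \<in> I \<Longrightarrow> transpose (P k) = P k"
    and L: "L = (\<Sum>k\<in>I. w k *\<^sub>R P k)"
    and symL: "transpose L = L" and LM: "L ** M = mat 1"
    and B: "B = (\<Sum>k\<in>I. w k *\<^sub>R (P k *v mm k))"
  shows "(\<Sum>k\<in>I. w k * ((x - mm k) \<bullet> (P k *v (x - mm k))))
       = (x - M *v B) \<bullet> (L *v (x - M *v B))
         + ((\<Sum>k\<in>I. w k * (mm k \<bullet> (P k *v mm k))) - B \<bullet> (M *v B))"
proof -
  have e1: "(x - mm k) \<bullet> (P k *v (x - mm k)) = x \<bullet> (P k *v x) - 2 * (x \<bullet> (P k *v mm k)) + mm k \<bullet> (P k *v mm k)"
    if "k \<in> I" for k
  proof -
    have "mm k \<bullet> (P k *v x) = x \<bullet> (P k *v mm k)"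
      using inner_mat_sym[OF symP[OF that], of "mm k" x] by (simp add: inner_commute)
    then show ?thesis
      by (simp add: matrix_vector_mult_diff_distrib inner_diff_left inner_diff_right)
  qed
  have symf: "mm k \<bullet> (P k *v x) = x \<bullet> (P k *v mm k)" if "k \<in> I" for k
    using inner_mat_sym[OF symP[OF that], of "mm k" x] by (simp add: inner_commute)
  have "(\<Sum>k\<in>I. w k * ((x - mm k) \<bullet> (P k *v (x - mm k))))
      = (\<Sum>k\<in>I. w k * (x \<bullet> (P k *v x))) - 2 * (\<Sum>k\<in>I. w k * (x \<bullet> (P k *v mm k)))
        + (\<Sum>k\<in>I. w k * (mm k \<bullet> (P k *v mm k)))"
  proof -
    have "(\<Sum>k\<in>I. w k * ((x - mm k) \<bullet> (P k *v (x - mm k))))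
       = (\<Sum>k\<in>I. w k * (x \<bullet> (P k *v x)) - 2 * (w k * (x \<bullet> (P k *v mm k))) + w k * (mm k \<bullet> (P k *v mm k)))"
      using symf by (intro sum.cong) (auto simp: algebra_simps matrix_vector_mult_diff_distrib inner_diff_left inner_diff_right)
    then show ?thesis by (simp add: sum.distrib sum_subtractf sum_distrib_left)
  qed
  also have "(\<Sum>k\<in>I. w k * (x \<bullet> (P k *v x))) = x \<bullet> (L *v x)"
    by (simp add: L sum_mat_vec inner_sum_right smv)
  also have "(\<Sum>k\<in>I. w k * (x \<bullet> (P k *v mm k))) = x \<bullet> B"
    by (simp add: B inner_sum_right)
  finally have lhs: "(\<Sum>k\<in>I. w k * ((x - mm k) \<bullet> (P k *v (x - mm k))))
      = x \<bullet> (L *v x) - 2 * (x \<bullet> B) + (\<Sum>k\<in>I. w k * (mm k \<bullet> (P k *v mm k)))" .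
  have LMB: "L *v (M *v B) = B" by (simp add: matrix_vector_mul_assoc LM)
  have r2: "(M *v B) \<bullet> (L *v x) = x \<bullet> B"
    using inner_mat_sym[OF symL, of "M *v B" x] LMB by (simp add: inner_commute)
  have "(x - M *v B) \<bullet> (L *v (x - M *v B))
      = x \<bullet> (L *v x) - x \<bullet> (L *v (M *v B)) - (M *v B) \<bullet> (L *v x) + (M *v B) \<bullet> (L *v (M *v B))"
    by (simp add: matrix_vector_mult_diff_distrib inner_diff_left inner_diff_right)
  also have "\<dots> = x \<bullet> (L *v x) - 2 * (x \<bullet> B) + B \<bullet> (M *v B)"
    using LMB r2 by (simp add: inner_commute)
  finally show ?thesis using lhs by simp
qed



lemma transpose_add: "transpose ((A::real^'n^'n) + B) = transpose A + transpose B"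
  by (simp add: transpose_def vec_eq_iff)

lemma sym_wsum:
  assumes "\<And>k. k \<in> I \<Longrightarrow> transpose (A k) = (A k :: real^'n^'n)"
  shows "transpose (\<Sum>k\<in>I. w k *\<^sub>R A k) = (\<Sum>k\<in>I. w k *\<^sub>R A k)"
  using assms
proof (induction I rule: infinite_finite_induct)
  case (infinite I) then show ?case by (simp add: transpose_def vec_eq_iff)
next
  case empty then show ?case by (simp add: transpose_def vec_eq_iff)
next
  case (insert k F) then show ?case by (simp add: transpose_add transpose_scalar)
qed

lemma D1:
  assumes "(f has_derivative f') F"
  shows "((\<lambda>x. (A::real^'n^'m) *v f x) has_derivative (\<lambda>h. A *v f' h)) F"
  using bounded_linear.has_derivative[OF matrix_vector_mul_bounded_linear assms] .

lemma D2:
  fixes S P :: "real^'m^'m"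
  assumes symS: "transpose S = S" and PS: "P ** S = mat 1" and SP: "S ** P = mat 1"
    and dmu: "(mu has_derivative (\<lambda>h. \<beta> *\<^sub>R (S *v h))) (at t)"
  shows "((\<lambda>u. mu u \<bullet> (P *v mu u)) has_derivative (\<lambda>h. (2 * \<beta>) * (mu t \<bullet> h))) (at t)"
proof -
  have "((\<lambda>u. mu u \<bullet> (P *v mu u)) has_derivative
      (\<lambda>h. mu t \<bullet> (P *v (\<beta> *\<^sub>R (S *v h))) + (\<beta> *\<^sub>R (S *v h)) \<bullet> (P *v mu t))) (at t)"
    by (rule has_derivative_inner[OF dmu D1[OF dmu]])
  moreover have "(\<lambda>h. mu t \<bullet> (P *v (\<beta> *\<^sub>R (S *v h))) + (\<beta> *\<^sub>R (S *v h)) \<bullet> (P *v mu t))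
       = (\<lambda>h. (2 * \<beta>) * (mu t \<bullet> h))"
  proof
    fix h
    have a: "P *v (S *v h) = h"
      by (simp add: matrix_vector_mult_scaleR matrix_vector_mul_assoc PS)
    have "h \<bullet> (S *v (P *v mu t)) = (S *v h) \<bullet> (P *v mu t)" by (rule inner_mat_sym[OF symS])
    then have b: "(S *v h) \<bullet> (P *v mu t) = h \<bullet> mu t"
      by (simp add: matrix_vector_mul_assoc SP)
    show "mu t \<bullet> (P *v (\<beta> *\<^sub>R (S *v h))) + (\<beta> *\<^sub>R (S *v h)) \<bullet> (P *v mu t) = (2 * \<beta>) * (mu t \<bullet> h)"
      using a b by (simp add: inner_commute algebra_simps)
  qed
  ultimately show ?thesis by simp
qed

lemma D3:
  fixes S P :: "nat \<Rightarrow> real^'m^'m"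
  assumes PS: "\<And>k. k \<in> I \<Longrightarrow> P k ** S k = mat 1"
    and dmu: "\<And>k. k \<in> I \<Longrightarrow> (mu k has_derivative (\<lambda>h. \<beta> *\<^sub>R (S k *v h))) (at t)"
  shows "((\<lambda>u. \<Sum>k\<in>I. w k *\<^sub>R (P k *v mu k u)) has_derivative (\<lambda>h. (\<Sum>k\<in>I. w k) *\<^sub>R (\<beta> *\<^sub>R h))) (at t)"
proof -
  have "((\<lambda>u. \<Sum>k\<in>I. w k *\<^sub>R (P k *v mu k u)) has_derivative
        (\<lambda>h. \<Sum>k\<in>I. w k *\<^sub>R (P k *v (\<beta> *\<^sub>R (S k *v h))))) (at t)"
    by (intro has_derivative_sum has_derivative_scaleR_right D1 dmu)
  moreover have "(\<lambda>h. \<Sum>k\<in>I. w k *\<^sub>R (P k *v (\<beta> *\<^sub>R (S k *v h)))) = (\<lambda>h. (\<Sum>k\<in>I. w k) *\<^sub>R (\<beta> *\<^sub>R h))"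
  proof
    fix h
    have "(\<Sum>k\<in>I. w k *\<^sub>R (P k *v (\<beta> *\<^sub>R (S k *v h)))) = (\<Sum>k\<in>I. w k *\<^sub>R (\<beta> *\<^sub>R h))"
      by (rule sum.cong) (simp_all add: matrix_vector_mult_scaleR matrix_vector_mul_assoc PS)
    then show "(\<Sum>k\<in>I. w k *\<^sub>R (P k *v (\<beta> *\<^sub>R (S k *v h)))) = (\<Sum>k\<in>I. w k) *\<^sub>R (\<beta> *\<^sub>R h)"
      by (simp add: scaleR_sum_left sum_distrib_right)
  qed
  ultimately show ?thesis by simp
qed

lemma D4:
  fixes M :: "real^'m^'m"
  assumes symM: "transpose M = M"
    and db: "(b has_derivative (\<lambda>h. \<beta> *\<^sub>R h)) (at t)"
  shows "((\<lambda>u. b u \<bullet> (M *v b u)) has_derivative (\<lambda>h. (2 * \<beta>) * ((M *v b t) \<bullet> h))) (at t)"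
proof -
  have "((\<lambda>u. b u \<bullet> (M *v b u)) has_derivative
      (\<lambda>h. b t \<bullet> (M *v (\<beta> *\<^sub>R h)) + (\<beta> *\<^sub>R h) \<bullet> (M *v b t))) (at t)"
    by (rule has_derivative_inner[OF db D1[OF db]])
  moreover have "(\<lambda>h. b t \<bullet> (M *v (\<beta> *\<^sub>R h)) + (\<beta> *\<^sub>R h) \<bullet> (M *v b t))
       = (\<lambda>h. (2 * \<beta>) * ((M *v b t) \<bullet> h))"
  proof
    fix h
    have "b t \<bullet> (M *v h) = (M *v b t) \<bullet> h" by (rule inner_mat_sym[OF symM])
    then show "b t \<bullet> (M *v (\<beta> *\<^sub>R h)) + (\<beta> *\<^sub>R h) \<bullet> (M *v b t) = (2 * \<beta>) * ((M *v b t) \<bullet> h)"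
      by (simp add: matrix_vector_mult_scaleR inner_commute algebra_simps)
  qed
  ultimately show ?thesis by simp
qed

lemma sum_split0: "sum f {0..n} = f 0 + sum f {1..(n::nat)}"
  by (simp add: sum.atLeast_Suc_atMost)



theorem lemma2:
  fixes \<alpha> :: real and n :: nat
    and pl :: "real^'m \<Rightarrow> real" and p :: "nat \<Rightarrow> real^'m \<Rightarrow> real"
  assumes "0 < \<alpha>" and "\<alpha> < 1" and "1 \<le> n"
    and "prob_density pl" and "\<forall>x. 0 < pl x" and "C2 pl"
    and "\<forall>j\<in>{1..n}. prob_density (p j) \<and> (\<forall>x. 0 < p j x) \<and> C2 (p j)"
    and "\<forall>\<theta>. sym_pos_def (tw_cov \<alpha> pl \<theta>)"
    and "\<forall>j\<in>{1..n}. \<forall>\<theta>. sym_pos_def (tw_cov \<alpha> (p j) \<theta>)"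
    and "\<forall>\<theta>. pos_def (Lam \<alpha> pl p n \<theta>)"
    and "\<forall>j\<in>{1..n}. \<forall>\<theta>. (tw_cov \<alpha> (p j) has_derivative (\<lambda>_. 0)) (at \<theta>)"
    and "\<forall>\<theta>. (tw_cov \<alpha> pl has_derivative (\<lambda>_. 0)) (at \<theta>)"
  shows "\<forall>\<theta>. shat \<alpha> pl p n \<theta> =
           matrix_inv (Lam \<alpha> pl p n \<theta>) *v
             ((\<Sum>j\<in>{1..n}. matrix_inv (tw_cov \<alpha> (p j) \<theta>) *v grad (\<lambda>u. ln (p j u)) \<theta>)
              + (1 - real n) *\<^sub>R (matrix_inv (tw_cov \<alpha> pl \<theta>) *v grad (\<lambda>u. ln (pl u)) \<theta>))"
proof (intro allI)
  fix t :: "real^'m"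
  define q where "q k = (if k = 0 then pl else p k)" for k
  define w :: "nat \<Rightarrow> real" where "w k = (if k = 0 then 1 - real n else 1)" for k
  define I where "I = {0..n}"
  have I0: "0 \<in> I" by (simp add: I_def)
  have I1: "k \<in> I" "k \<noteq> 0" if "k \<in> {1..n}" for k using that by (auto simp: I_def)
  have wsum: "(\<Sum>k\<in>I. w k) = 1"
  proof -
    have "(\<Sum>k\<in>{1..n}. w k) = (\<Sum>k\<in>{1..n}. 1)" by (rule sum.cong) (auto simp: w_def)
    then show ?thesis unfolding I_def by (simp add: sum_split0 w_def)
  qed
  have hq: "C2 (q k) \<and> (\<forall>x. 0 < q k x) \<and> (\<forall>\<theta>. sym_pos_def (tw_cov \<alpha> (q k) \<theta>))
      \<and> (\<forall>\<theta>. (tw_cov \<alpha> (q k) has_derivative (\<lambda>_. 0)) (at \<theta>))" if "k \<in> I" for k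
  proof (cases "k = 0")
    case True then show ?thesis using assms by (simp add: q_def)
  next
    case False
    then have "k \<in> {1..n}" using that by (auto simp: I_def)
    then show ?thesis using assms False by (simp add: q_def)
  qed
  define S where "S k = tw_cov \<alpha> (q k) 0" for k
  define P where "P k = matrix_inv (S k)" for k
  define mu where "mu k = tw_mean \<alpha> (q k)" for k
  define \<beta> where "\<beta> = sqrt \<alpha> / (1 - \<alpha>)"
  have Scon: "tw_cov \<alpha> (q k) u = S k" if "k \<in> I" for k u
    using tw_props(2)[of "q k" \<alpha> u] hq[OF that] assms(1,2) by (simp add: S_def)
  have dmu: "(mu k has_derivative (\<lambda>h. \<beta> *\<^sub>R (S k *v h))) (at u)" if "k \<in> I" for k u
    using tw_props(1)[of "q k" \<alpha> u] hq[OF that] assms(1,2) Scon[OF that] by (simp add: mu_def \<beta>_def)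
  have Ssp: "sym_pos_def (S k)" if "k \<in> I" for k using hq[OF that] by (simp add: S_def)
  have Ssym: "transpose (S k) = S k" if "k \<in> I" for k using Ssp[OF that] by (simp add: sym_pos_def_def)
  have Spd: "pos_def (S k)" if "k \<in> I" for k using Ssp[OF that] by (simp add: sym_pos_def_def)
  have Sinv: "invertible (S k)" if "k \<in> I" for k using pos_def_invertible[OF Spd[OF that]] .
  have SP: "S k ** P k = mat 1" if "k \<in> I" for k using matrix_inv_both(1)[OF Sinv[OF that]] by (simp add: P_def)
  have PS: "P k ** S k = mat 1" if "k \<in> I" for k using matrix_inv_both(2)[OF Sinv[OF that]] by (simp add: P_def)
  have Psym: "transpose (P k) = P k" if "k \<in> I" for k
    using matrix_inv_sym[OF Sinv[OF that] Ssym[OF that]] by (simp add: P_def)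
  define \<Lambda> where "\<Lambda> = (\<Sum>k\<in>I. w k *\<^sub>R P k)"
  have Lam_eq: "Lam \<alpha> pl p n u = \<Lambda>" for u
  proof -
    have "\<Lambda> = w 0 *\<^sub>R P 0 + (\<Sum>k\<in>{1..n}. w k *\<^sub>R P k)" unfolding \<Lambda>_def I_def by (rule sum_split0)
    also have "(\<Sum>k\<in>{1..n}. w k *\<^sub>R P k) = (\<Sum>j\<in>{1..n}. matrix_inv (tw_cov \<alpha> (p j) u))"
    proof (rule sum.cong[OF refl])
      fix k assume k: "k \<in> {1..n}"
      show "w k *\<^sub>R P k = matrix_inv (tw_cov \<alpha> (p k) u)"
        using Scon[OF I1(1)[OF k], of u] I1(2)[OF k] by (simp add: w_def P_def q_def)
    qed
    also have "w 0 *\<^sub>R P 0 = (1 - real n) *\<^sub>R matrix_inv (tw_cov \<alpha> pl u)"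
      using Scon[OF I0, of u] by (simp add: w_def P_def q_def)
    finally show ?thesis by (simp add: Lam_def add.commute)
  qed
  have Lpd: "pos_def \<Lambda>" using assms(10) Lam_eq by metis
  have Linv: "invertible \<Lambda>" using pos_def_invertible[OF Lpd] .
  have Lsym: "transpose \<Lambda> = \<Lambda>" unfolding \<Lambda>_def by (rule sym_wsum) (rule Psym)
  define M where "M = matrix_inv \<Lambda>"
  have LM: "\<Lambda> ** M = mat 1" using matrix_inv_both(1)[OF Linv] by (simp add: M_def)
  have Minvl: "M ** \<Lambda> = mat 1" using matrix_inv_both(2)[OF Linv] by (simp add: M_def)
  have Msym: "transpose M = M" using matrix_inv_sym[OF Linv Lsym] by (simp add: M_def)
  define b where "b u = (\<Sum>k\<in>I. w k *\<^sub>R (P k *v mu k u))" for u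
  define c where "c u = (\<Sum>k\<in>I. w k * (mu k u \<bullet> (P k *v mu k u))) - b u \<bullet> (M *v b u)" for u
  define d where "d k = sqrt ((2 * pi) ^ CARD('m) * det (S k))" for k
  have dpos: "0 < d k" if "k \<in> I" for k using pos_def_det_pos[OF Spd[OF that]] by (simp add: d_def)
  define Kd where "Kd = 1 / (d 0 powr (1 - real n) * (\<Prod>j\<in>{1..n}. d j))"
  have Kpos: "0 < Kd"
  proof -
    have "0 < (\<Prod>j\<in>{1..n}. d j)" by (rule prod_pos) (use dpos I1 in auto)
    then show ?thesis using dpos[OF I0] by (simp add: Kd_def)
  qed
  define I0 where "I0 = integral\<^sup>L lborel (\<lambda>x::real^'m. exp (- (1/2) * (x \<bullet> (\<Lambda> *v x))))"
  have I0pos: "0 < I0" using quad_int_pos(2)[OF Lpd] by (simp add: I0_def)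
  have integrand: "gauss x (tw_mean \<alpha> pl u) (tw_cov \<alpha> pl u) powr (1 - real n)
      * (\<Prod>j\<in>{1..n}. gauss x (tw_mean \<alpha> (p j) u) (tw_cov \<alpha> (p j) u))
      = Kd * exp (- (1/2) * (\<Sum>k\<in>I. w k * ((x - mu k u) \<bullet> (P k *v (x - mu k u)))))" for x u
  proof -
    define Q where "Q k = (x - mu k u) \<bullet> (P k *v (x - mu k u))" for k
    have g: "gauss x (mu k u) (tw_cov \<alpha> (q k) u) = exp (- (1/2) * Q k) / d k" if "k \<in> I" for k
      using Scon[OF that, of u] by (simp add: gauss_def Q_def P_def d_def)
    have g0: "gauss x (tw_mean \<alpha> pl u) (tw_cov \<alpha> pl u) = exp (- (1/2) * Q 0) / d 0"
      using g[OF I0] by (simp add: q_def mu_def)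
    have gj: "(\<Prod>j\<in>{1..n}. gauss x (tw_mean \<alpha> (p j) u) (tw_cov \<alpha> (p j) u)) = (\<Prod>j\<in>{1..n}. exp (- (1/2) * Q j) / d j)"
    proof (rule prod.cong[OF refl])
      fix j assume j: "j \<in> {1..n}"
      show "gauss x (tw_mean \<alpha> (p j) u) (tw_cov \<alpha> (p j) u) = exp (- (1/2) * Q j) / d j"
        using g[OF I1(1)[OF j]] I1(2)[OF j] by (simp add: q_def mu_def)
    qed
    have p1: "(exp (- (1/2) * Q 0) / d 0) powr (1 - real n) = exp (- (1/2) * Q 0) powr (1 - real n) / d 0 powr (1 - real n)"
      using dpos[OF I0] by (simp add: powr_divide)
    have p2: "exp (- (1/2) * Q 0) powr (1 - real n) = exp ((1 - real n) * (- (1/2) * Q 0))"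
      by (simp add: powr_def)
    have pj: "(\<Prod>j\<in>{1..n}. exp (- (1/2) * Q j) / d j) = exp (\<Sum>j\<in>{1..n}. - (1/2) * Q j) / (\<Prod>j\<in>{1..n}. d j)"
      by (simp add: prod_dividef exp_sum)
    have sumQ: "(\<Sum>k\<in>I. w k * Q k) = (1 - real n) * Q 0 + (\<Sum>j\<in>{1..n}. Q j)"
    proof -
      have "(\<Sum>k\<in>{1..n}. w k * Q k) = (\<Sum>k\<in>{1..n}. Q k)" by (rule sum.cong) (auto simp: w_def)
      then show ?thesis unfolding I_def by (simp add: sum_split0 w_def)
    qed
    have "gauss x (tw_mean \<alpha> pl u) (tw_cov \<alpha> pl u) powr (1 - real n)
      * (\<Prod>j\<in>{1..n}. gauss x (tw_mean \<alpha> (p j) u) (tw_cov \<alpha> (p j) u))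
      = exp ((1 - real n) * (- (1/2) * Q 0)) / d 0 powr (1 - real n) * (exp (\<Sum>j\<in>{1..n}. - (1/2) * Q j) / (\<Prod>j\<in>{1..n}. d j))"
      by (simp only: g0 gj p1 p2 pj)
    also have "\<dots> = Kd * exp ((1 - real n) * (- (1/2) * Q 0) + (\<Sum>j\<in>{1..n}. - (1/2) * Q j))"
      unfolding Kd_def exp_add by simp
    also have "(1 - real n) * (- (1/2) * Q 0) + (\<Sum>j\<in>{1..n}. - (1/2) * Q j) = - (1/2) * (\<Sum>k\<in>I. w k * Q k)"
    proof -
      have s: "(\<Sum>j\<in>{1..n}. - (1/2) * Q j) = - (1/2) * (\<Sum>j\<in>{1..n}. Q j)"
        by (rule sum_distrib_left[symmetric])
      show ?thesis unfolding s sumQ by (simp add: field_simps)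
    qed
    finally show ?thesis by (simp add: Q_def)
  qed
  have Lhat_eq: "Lhat \<alpha> pl p n u = Kd * exp (- (1/2) * c u) * I0" for u
  proof -
    have cs: "(\<Sum>k\<in>I. w k * ((x - mu k u) \<bullet> (P k *v (x - mu k u))))
        = (x - M *v b u) \<bullet> (\<Lambda> *v (x - M *v b u)) + c u" for x
      using complete_square[where I=I and P=P and L=\<Lambda> and w=w and M=M and B="b u" and mm="\<lambda>k. mu k u" and x=x,
          OF Psym \<Lambda>_def Lsym LM b_def[of u]]
      by (simp add: c_def)
    have "Lhat \<alpha> pl p n u = (LINT x|lborel. (Kd * exp (- (1/2) * c u)) * exp (- (1/2) * ((x - M *v b u) \<bullet> (\<Lambda> *v (x - M *v b u)))))"
      unfolding Lhat_def
    proof (rule Bochner_Integration.integral_cong[OF refl])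
      fix x :: "real^'m"
      show "gauss x (tw_mean \<alpha> pl u) (tw_cov \<alpha> pl u) powr (1 - real n)
          * (\<Prod>j\<in>{1..n}. gauss x (tw_mean \<alpha> (p j) u) (tw_cov \<alpha> (p j) u))
          = (Kd * exp (- (1/2) * c u)) * exp (- (1/2) * ((x - M *v b u) \<bullet> (\<Lambda> *v (x - M *v b u))))"
        unfolding integrand cs by (simp add: algebra_simps flip: exp_add)
    qed
    also have "\<dots> = (Kd * exp (- (1/2) * c u)) * (LINT x|lborel. exp (- (1/2) * ((x - M *v b u) \<bullet> (\<Lambda> *v (x - M *v b u)))))"
      by (rule integral_mult_right_zero)
    also have "(LINT x|lborel. exp (- (1/2) * ((x - M *v b u) \<bullet> (\<Lambda> *v (x - M *v b u))))) = I0"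
      using integral_translate[where f="\<lambda>x::real^'m. exp (- (1/2) * (x \<bullet> (\<Lambda> *v x)))" and m="M *v b u", OF quad_meas]
      by (simp add: I0_def)
    finally show ?thesis .
  qed
  have lnL: "(\<lambda>u. ln (Lhat \<alpha> pl p n u)) = (\<lambda>u. ln (Kd * I0) - (1/2) * c u)"
  proof
    fix u
    show "ln (Lhat \<alpha> pl p n u) = ln (Kd * I0) - (1/2) * c u"
      using Kpos I0pos by (simp add: Lhat_eq ln_mult)
  qed
  have dc: "(c has_derivative (\<lambda>h. (2 * \<beta>) * (((\<Sum>k\<in>I. w k *\<^sub>R mu k t) - M *v b t) \<bullet> h))) (at t)"
  proof -
    have d1: "((\<lambda>u. \<Sum>k\<in>I. w k * (mu k u \<bullet> (P k *v mu k u))) has_derivative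
        (\<lambda>h. \<Sum>k\<in>I. w k * ((2 * \<beta>) * (mu k t \<bullet> h)))) (at t)"
    proof (intro has_derivative_sum has_derivative_mult_right)
      fix k assume k: "k \<in> I"
      show "((\<lambda>u. mu k u \<bullet> (P k *v mu k u)) has_derivative (\<lambda>h. (2 * \<beta>) * (mu k t \<bullet> h))) (at t)"
        by (rule D2[OF Ssym[OF k] PS[OF k] SP[OF k] dmu[OF k]])
    qed
    have db: "(b has_derivative (\<lambda>h. \<beta> *\<^sub>R h)) (at t)"
      using D3[of I P S mu \<beta> t w] PS dmu wsum by (simp add: b_def[abs_def])
    have d2: "((\<lambda>u. b u \<bullet> (M *v b u)) has_derivative (\<lambda>h. (2 * \<beta>) * ((M *v b t) \<bullet> h))) (at t)"
      by (rule D4[OF Msym db])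
    have "(c has_derivative (\<lambda>h. (\<Sum>k\<in>I. w k * ((2 * \<beta>) * (mu k t \<bullet> h))) - (2 * \<beta>) * ((M *v b t) \<bullet> h))) (at t)"
      unfolding c_def[abs_def] by (rule has_derivative_diff[OF d1 d2])
    moreover have "(\<lambda>h. (\<Sum>k\<in>I. w k * ((2 * \<beta>) * (mu k t \<bullet> h))) - (2 * \<beta>) * ((M *v b t) \<bullet> h))
        = (\<lambda>h. (2 * \<beta>) * (((\<Sum>k\<in>I. w k *\<^sub>R mu k t) - M *v b t) \<bullet> h))"
      by (rule ext) (simp add: inner_diff_left inner_sum_left sum_distrib_left algebra_simps)
    ultimately show ?thesis by simp
  qed
  have gL: "grad (\<lambda>u. ln (Lhat \<alpha> pl p n u)) t = \<beta> *\<^sub>R (M *v b t - (\<Sum>k\<in>I. w k *\<^sub>R mu k t))"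
  proof -
    have "((\<lambda>u. ln (Kd * I0) - (1/2) * c u) has_derivative
        (\<lambda>h. 0 - (1/2) * ((2 * \<beta>) * (((\<Sum>k\<in>I. w k *\<^sub>R mu k t) - M *v b t) \<bullet> h)))) (at t)"
      by (intro has_derivative_diff has_derivative_const has_derivative_mult_right dc)
    moreover have "(\<lambda>h. 0 - (1/2) * ((2 * \<beta>) * (((\<Sum>k\<in>I. w k *\<^sub>R mu k t) - M *v b t) \<bullet> h)))
        = (\<lambda>h. (\<beta> *\<^sub>R (M *v b t - (\<Sum>k\<in>I. w k *\<^sub>R mu k t))) \<bullet> h)"
      by (rule ext) (simp add: inner_diff_left algebra_simps)
    ultimately have "((\<lambda>u. ln (Lhat \<alpha> pl p n u)) has_derivative
        (\<lambda>h. (\<beta> *\<^sub>R (M *v b t - (\<Sum>k\<in>I. w k *\<^sub>R mu k t))) \<bullet> h)) (at t)"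
      unfolding lnL by simp
    then show ?thesis by (rule grad_inner)
  qed
  define G where "G k = grad (\<lambda>u. ln (q k u)) t" for k
  have muG: "mu k t = (1 / sqrt \<alpha>) *\<^sub>R (t + (1 - \<alpha>) *\<^sub>R G k)" for k
    by (simp add: mu_def G_def tw_mean_def)
  define V where "V = (\<Sum>k\<in>I. w k *\<^sub>R (P k *v G k))"
  define W where "W = (\<Sum>k\<in>I. w k *\<^sub>R G k)"
  have shat_eq: "shat \<alpha> pl p n t = W + grad (\<lambda>u. ln (Lhat \<alpha> pl p n u)) t"
  proof -
    have "W = w 0 *\<^sub>R G 0 + (\<Sum>k\<in>{1..n}. w k *\<^sub>R G k)" unfolding W_def I_def by (rule sum_split0)
    also have "(\<Sum>k\<in>{1..n}. w k *\<^sub>R G k) = (\<Sum>j\<in>{1..n}. grad (\<lambda>u. ln (p j u)) t)"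
      by (rule sum.cong[OF refl]) (auto simp: w_def G_def q_def)
    finally show ?thesis by (simp add: shat_def w_def G_def q_def)
  qed
  have rhs_eq: "matrix_inv (Lam \<alpha> pl p n t) *v
             ((\<Sum>j\<in>{1..n}. matrix_inv (tw_cov \<alpha> (p j) t) *v grad (\<lambda>u. ln (p j u)) t)
              + (1 - real n) *\<^sub>R (matrix_inv (tw_cov \<alpha> pl t) *v grad (\<lambda>u. ln (pl u)) t)) = M *v V"
  proof -
    have "V = w 0 *\<^sub>R (P 0 *v G 0) + (\<Sum>k\<in>{1..n}. w k *\<^sub>R (P k *v G k))" unfolding V_def I_def by (rule sum_split0)
    also have "(\<Sum>k\<in>{1..n}. w k *\<^sub>R (P k *v G k)) = (\<Sum>j\<in>{1..n}. matrix_inv (tw_cov \<alpha> (p j) t) *v grad (\<lambda>u. ln (p j u)) t)"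
    proof (rule sum.cong[OF refl])
      fix k assume k: "k \<in> {1..n}"
      show "w k *\<^sub>R (P k *v G k) = matrix_inv (tw_cov \<alpha> (p k) t) *v grad (\<lambda>u. ln (p k u)) t"
        using Scon[OF I1(1)[OF k], of t] I1(2)[OF k] by (simp add: w_def P_def q_def G_def)
    qed
    also have "w 0 *\<^sub>R (P 0 *v G 0) = (1 - real n) *\<^sub>R (matrix_inv (tw_cov \<alpha> pl t) *v grad (\<lambda>u. ln (pl u)) t)"
      using Scon[OF I0, of t] by (simp add: w_def P_def q_def G_def)
    finally show ?thesis by (simp add: Lam_eq M_def add.commute)
  qed
  have bt: "b t = (1 / sqrt \<alpha>) *\<^sub>R (\<Lambda> *v t + (1 - \<alpha>) *\<^sub>R V)"
  proof -
    have "b t = (\<Sum>k\<in>I. (1 / sqrt \<alpha>) *\<^sub>R (w k *\<^sub>R (P k *v t) + (1 - \<alpha>) *\<^sub>R (w k *\<^sub>R (P k *v G k))))"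
      unfolding b_def by (rule sum.cong[OF refl]) (simp add: muG matrix_vector_right_distrib matrix_vector_mult_scaleR algebra_simps)
    also have "\<dots> = (1 / sqrt \<alpha>) *\<^sub>R ((\<Sum>k\<in>I. w k *\<^sub>R (P k *v t)) + (1 - \<alpha>) *\<^sub>R V)"
      by (simp add: V_def scaleR_sum_right sum.distrib scaleR_right_distrib)
    also have "(\<Sum>k\<in>I. w k *\<^sub>R (P k *v t)) = \<Lambda> *v t"
      by (simp add: \<Lambda>_def sum_mat_vec smv)
    finally show ?thesis .
  qed
  have Mbt: "M *v b t = (1 / sqrt \<alpha>) *\<^sub>R (t + (1 - \<alpha>) *\<^sub>R (M *v V))"
    by (simp add: bt matrix_vector_right_distrib matrix_vector_mult_scaleR matrix_vector_mul_assoc Minvl)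
  have smu: "(\<Sum>k\<in>I. w k *\<^sub>R mu k t) = (1 / sqrt \<alpha>) *\<^sub>R (t + (1 - \<alpha>) *\<^sub>R W)"
  proof -
    have "(\<Sum>k\<in>I. w k *\<^sub>R mu k t) = (\<Sum>k\<in>I. (1 / sqrt \<alpha>) *\<^sub>R (w k *\<^sub>R t + (1 - \<alpha>) *\<^sub>R (w k *\<^sub>R G k)))"
      by (rule sum.cong[OF refl]) (simp add: muG algebra_simps)
    also have "\<dots> = (1 / sqrt \<alpha>) *\<^sub>R ((\<Sum>k\<in>I. w k) *\<^sub>R t + (1 - \<alpha>) *\<^sub>R W)"
      by (simp add: W_def scaleR_sum_right sum.distrib scaleR_sum_left scaleR_right_distrib)
    finally show ?thesis by (simp add: wsum)
  qed
  have coef: "\<beta> * (1 / sqrt \<alpha>) * (1 - \<alpha>) = 1"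
    using assms(1,2) by (simp add: \<beta>_def)
  have "grad (\<lambda>u. ln (Lhat \<alpha> pl p n u)) t = (\<beta> * (1 / sqrt \<alpha>) * (1 - \<alpha>)) *\<^sub>R (M *v V - W)"
  proof -
    have "M *v b t - (\<Sum>k\<in>I. w k *\<^sub>R mu k t) = ((1 / sqrt \<alpha>) * (1 - \<alpha>)) *\<^sub>R (M *v V - W)"
      unfolding Mbt smu by (simp only: scaleR_right_distrib scaleR_right_diff_distrib scaleR_scaleR) simp
    then show ?thesis unfolding gL by (simp add: mult.assoc)
  qed
  then have "grad (\<lambda>u. ln (Lhat \<alpha> pl p n u)) t = M *v V - W" by (simp only: coef scaleR_one)
  then show "shat \<alpha> pl p n t =
           matrix_inv (Lam \<alpha> pl p n t) *v
             ((\<Sum>j\<in>{1..n}. matrix_inv (tw_cov \<alpha> (p j) t) *v grad (\<lambda>u. ln (p j u)) t)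
              + (1 - real n) *\<^sub>R (matrix_inv (tw_cov \<alpha> pl t) *v grad (\<lambda>u. ln (pl u)) t))"
    unfolding rhs_eq shat_eq by simp
qed

end
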